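(* For each $k\in\mathbb N$ let $m_k\in\mathbb N$ with $\lim_{k\to\infty}m_k/k=0$. (a) For every $a>0$ there exist $\epsilon(a)>0$ and $k_0,m_0\in\mathbb N$ such that for all $k\ge k_0$ and all integers $m\in[m_0,m_k]$, $$I\Bigl(j+1,k-j+1;\frac{m-a\sqrt m}{k}\Bigr)\ge\epsilon(a),\qquad j=0,\dots,m-1.$$ (b) For every $\epsilon>0$ there exist $a>0$, $k_0\in\mathbb N$ and $m_0=m_0(a)$ such that for all $k\ge k_0$ and all integers $m\in[m_0,m_k]$, $$I\Bigl(j+1,k-j+1;\frac{m-a\sqrt m}{k}\Bigr)\le\epsilon\,I\Bigl(j+1,k-j+1;\frac mk\Bigr),\qquad j=m,\dots,k.$$
   Context: For $a,b>0$ and $x\in(0,1)$, $I(a,b;x)=\frac{1}{\beta(a,b)}\int_0^x t^{a-1}(1-t)^{b-1}dt$ is the normalized incomplete beta function, where $\beta(a,b)=\int_0^1t^{a-1}(1-t)^{b-1}dt=\frac{\Gamma(a)\Gamma(b)}{\Gamma(a+b)}$. *)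

theory Defs
  imports "HOL-Analysis.Analysis"
begin

definition inc_beta :: "real \<Rightarrow> real \<Rightarrow> real \<Rightarrow> real" where
  "inc_beta a b x = integral {0..x} (\<lambda>t. t powr (a - 1) * (1 - t) powr (b - 1)) / Beta a b"

end

theory Submission
  imports Defs
begin

definition gp :: "nat \<Rightarrow> nat \<Rightarrow> real \<Rightarrow> real" where
  "gp p q t = t ^ p * (1 - t) ^ q"

lemma gp_cont[continuous_intros]: "continuous_on S (gp p q)"
  unfolding gp_def by (intro continuous_intros)

lemma gp_int[simp]: "gp p q integrable_on {a..b}"
  by (intro integrable_continuous_real gp_cont)

lemma gp_nonneg: "0 \<le> t \<Longrightarrow> t \<le> 1 \<Longrightarrow> 0 \<le> gp p q t"
  unfolding gp_def by simp

lemma J0: "(gp 0 q has_integral 1 / (real q + 1)) {0..1}"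
proof -
  have "((\<lambda>t. (real q + 1) * gp 0 q t) has_integral ((\<lambda>t. - ((1 - t) ^ (q+1))) 1 - (\<lambda>t. - ((1 - t) ^ (q+1))) 0)) {0..1}"
  proof (rule fundamental_theorem_of_calculus)
    fix x :: real
    have "((\<lambda>t. - ((1 - t) ^ (q+1))) has_real_derivative (real q + 1) * gp 0 q x) (at x within {0..1})"
      by (auto intro!: derivative_eq_intros simp: gp_def) (cases q; simp add: algebra_simps)
    then show "((\<lambda>t. - ((1 - t) ^ (q+1))) has_vector_derivative (real q + 1) * gp 0 q x) (at x within {0..1})"
      by (simp add: has_real_derivative_iff_has_vector_derivative)
  qed simp
  then have "((\<lambda>t. (real q + 1) * gp 0 q t) has_integral 1) {0..1}" by simp
  from has_integral_mult_right[OF this, of "1 / (real q + 1)"]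
  show ?thesis by simp
qed

lemma Jstep: "(real p + 1) * integral {0..1} (gp p (q+1)) = (real q + 1) * integral {0..1} (gp (p+1) q)"
proof -
  have "((\<lambda>t. (real p + 1) * gp p (q+1) t - (real q + 1) * gp (p+1) q t) has_integral
        ((\<lambda>t. t^(p+1) * (1-t)^(q+1)) 1 - (\<lambda>t. t^(p+1) * (1-t)^(q+1)) 0)) {0..1}"
  proof (rule fundamental_theorem_of_calculus)
    fix x :: real
    have "((\<lambda>t. t^(p+1) * (1-t)^(q+1)) has_real_derivative
       (real (p+1) * x ^ p * 1 * (1-x)^(q+1) + x^(p+1) * (real (q+1) * (1 - x) ^ q * (0 - 1)))) (at x within {0..1})"
    proof -
      have d1: "((\<lambda>t. t^(p+1)) has_real_derivative real (p+1) * x ^ p) (at x within {0..1})"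
        using DERIV_pow[of "p+1" x "{0..1}"] by simp
      have d0: "((\<lambda>t. 1 - t) has_real_derivative (0 - 1)) (at x within {0..1})"
        by (intro derivative_eq_intros) auto
      have d2: "((\<lambda>t. (1-t)^(q+1)) has_real_derivative real (q+1) * ((0 - 1) * (1 - x) ^ q)) (at x within {0..1})"
        using DERIV_power[OF d0, of "q+1"] by simp
      show ?thesis
        by (rule DERIV_cong[OF DERIV_mult[OF d1 d2]]) (simp add: algebra_simps)
    qed
    moreover have "real (p+1) * x ^ p * 1 * (1-x)^(q+1) + x^(p+1) * (real (q+1) * (1 - x) ^ q * (0 - 1))
        = (real p + 1) * gp p (q+1) x - (real q + 1) * gp (p+1) q x"
      unfolding gp_def by (simp add: power_Suc) algebra
    ultimately show "((\<lambda>t. t^(p+1) * (1-t)^(q+1)) has_vector_derivative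
        (real p + 1) * gp p (q+1) x - (real q + 1) * gp (p+1) q x) (at x within {0..1})"
      by (simp add: has_real_derivative_iff_has_vector_derivative)
  qed simp
  then have "((\<lambda>t. (real p + 1) * gp p (q+1) t - (real q + 1) * gp (p+1) q t) has_integral 0) {0..1}"
    by simp
  then have "integral {0..1} (\<lambda>t. (real p + 1) * gp p (q+1) t - (real q + 1) * gp (p+1) q t) = 0"
    by (simp add: integral_unique)
  moreover have "integral {0..1} (\<lambda>t. (real p + 1) * gp p (q+1) t - (real q + 1) * gp (p+1) q t)
     = (real p + 1) * integral {0..1} (gp p (q+1)) - (real q + 1) * integral {0..1} (gp (p+1) q)"
    by (subst integral_diff) (auto intro!: integrable_continuous_real continuous_intros)
  ultimately show ?thesis by simp
qed

lemma Jval: "integral {0..1} (gp p q) = fact p * fact q / fact (p + q + 1)"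
proof (induction p arbitrary: q)
  case 0
  then show ?case using J0[of q] by (simp add: integral_unique)
next
  case (Suc p)
  have e: "(real q + 1) * integral {0..1} (gp (p+1) q) = (real p + 1) * (fact p * fact (q+1) / fact (p + (q+1) + 1))"
    using Jstep[of p q] Suc[of "q+1"] by simp
  have f1: "fact (q+1) = (real q + 1) * (fact q :: real)" by simp
  have f2: "fact (Suc p) = (real p + 1) * (fact p :: real)" by simp
  have f3: "p + (q+1) + 1 = Suc p + q + 1" by simp
  have "(real p + 1) * (fact p * fact (q+1) / fact (p + (q+1) + 1)) = 
        (real q + 1) * (fact (Suc p) * fact q / fact (Suc p + q + 1))"
    unfolding f1 f2 f3 by (simp only: mult_ac times_divide_eq_right)
  with e have "(real q + 1) * integral {0..1} (gp (Suc p) q) = (real q + 1) * (fact (Suc p) * fact q / fact (Suc p + q + 1))"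
    by simp
  then show ?case by (subst (asm) mult_left_cancel) (simp_all add: add_nonneg_pos)
qed

lemma Beta_nat: "Beta (real p + 1) (real q + 1) = fact p * fact q / fact (p + q + 1)"
proof -
  have "Gamma (real p + 1) = fact p" "Gamma (real q + 1) = fact q"
       "Gamma (real p + 1 + (real q + 1)) = fact (p+q+1)"
    using Gamma_fact[of p, where 'a=real] Gamma_fact[of q, where 'a=real] Gamma_fact[of "p+q+1", where 'a=real]
    by (simp_all add: add_ac)
  then show ?thesis by (simp add: Beta_def)
qed

lemma Beta_J: "Beta (real p + 1) (real q + 1) = integral {0..1} (gp p q)"
  by (simp add: Beta_nat Jval)

lemma Beta_pos: "Beta (real p + 1) (real q + 1) > 0"
  by (simp add: Beta_nat)

lemma powr_int_eq:
  assumes "j \<le> k" "x \<le> 1"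
  shows "integral {0..x} (\<lambda>t. t powr real j * (1 - t) powr (real k - real j)) = integral {0..x} (gp j (k-j))"
proof (rule integral_spike[of "{0,1}"])
  show "negligible {0::real,1}" by simp
  have e: "real k - real j = real (k - j)" using assms by (simp add: of_nat_diff)
  fix t assume t: "t \<in> {0..x} - {0,1}"
  then have "0 < t" "0 < 1 - t" using assms by auto
  then show "gp j (k - j) t = t powr real j * (1 - t) powr (real k - real j)"
    unfolding e gp_def by (simp only: powr_realpow)
qed

lemma inc_beta_gp:
  assumes "j \<le> k" "x \<le> 1"
  shows "inc_beta (real j + 1) (real k - real j + 1) x = integral {0..x} (gp j (k-j)) / integral {0..1} (gp j (k-j))"
proof -
  have e: "real k - real j = real (k - j)" using assms by (simp add: of_nat_diff)
  have 1: "real j + 1 - 1 = real j" by simp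
  have 2: "real k - real j + 1 - 1 = real k - real j" by simp
  show ?thesis
    unfolding inc_beta_def 1 2 powr_int_eq[OF assms] unfolding e Beta_J ..
qed

lemma scale_eq:
  fixes f :: "real \<Rightarrow> real"
  assumes "c > 0" "u \<le> v" "continuous_on UNIV f"
  shows "integral {c * u .. c * v} f = c * integral {u..v} (\<lambda>t. f (c*t))"
proof -
  have i: "(f has_integral integral {c * u .. c * v} f) {c * u .. c * v}"
    by (intro integrable_integral integrable_continuous_real continuous_on_subset[OF assms(3)]) auto
  have im: "(\<lambda>x. x / c) ` {c * u .. c * v} = {u..v}"
  proof
    show "(\<lambda>x. x / c) ` {c * u .. c * v} \<subseteq> {u..v}" using assms by (auto simp: field_simps)
    show "{u..v} \<subseteq> (\<lambda>x. x / c) ` {c * u .. c * v}"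
    proof
      fix t assume "t \<in> {u..v}"
      then show "t \<in> (\<lambda>x. x / c) ` {c * u .. c * v}" using assms
        by (intro image_eqI[of _ _ "c*t"]) (auto simp: field_simps)
    qed
  qed
  from has_integral_stretch_real[OF i, of c] assms im
  have "((\<lambda>t. f (c*t)) has_integral (1/c) * integral {c * u .. c * v} f) {u..v}" by simp
  then have "integral {u..v} (\<lambda>t. f (c*t)) = (1/c) * integral {c * u .. c * v} f" by (rule integral_unique)
  then show ?thesis using assms by simp
qed

lemma scale_ge:
  fixes f :: "real \<Rightarrow> real"
  assumes "c > 0" "u \<le> v" "continuous_on UNIV f" "\<And>t. t \<in> {u..v} \<Longrightarrow> K * f t \<le> f (c*t)"
  shows "c * K * integral {u..v} f \<le> integral {c * u .. c * v} f"
proof -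
  have "K * integral {u..v} f = integral {u..v} (\<lambda>t. K * f t)" by simp
  also have "\<dots> \<le> integral {u..v} (\<lambda>t. f (c*t))"
    by (intro integral_le integrable_continuous_real continuous_intros assms(4)
         continuous_on_compose2[OF assms(3)]) auto
  finally show ?thesis using scale_eq[OF assms(1-3)] assms(1)
    by (simp add: mult.assoc mult_left_mono)
qed

lemma scale_le:
  fixes f :: "real \<Rightarrow> real"
  assumes "c > 0" "u \<le> v" "continuous_on UNIV f" "\<And>t. t \<in> {u..v} \<Longrightarrow> f (c*t) \<le> K * f t"
  shows "integral {c * u .. c * v} f \<le> c * K * integral {u..v} f"
proof -
  have "integral {u..v} (\<lambda>t. f (c*t)) \<le> integral {u..v} (\<lambda>t. K * f t)"
    by (intro integral_le integrable_continuous_real continuous_intros assms(4)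
         continuous_on_compose2[OF assms(3)]) auto
  also have "\<dots> = K * integral {u..v} f" by simp
  finally show ?thesis using scale_eq[OF assms(1-3)] assms(1)
    by (simp add: mult.assoc mult_left_mono)
qed



lemma scale_gp_ge:
  assumes c: "0 < c" "c \<le> 1" and u: "0 \<le> u" "u \<le> v" "v \<le> 1" "u < 1"
  shows "c^(p+1) * ((1 - c*u)/(1-u))^q * integral {u..v} (gp p q) \<le> integral {c * u .. c * v} (gp p q)"
proof -
  define r where "r = (1 - c*u)/(1-u)"
  have cu: "c * u \<le> u" using c u mult_right_mono[of c 1 u] by simp
  have r0: "0 \<le> r" unfolding r_def using cu u by simp
  have "c * (c^p * r^q) * integral {u..v} (gp p q) \<le> integral {c * u .. c * v} (gp p q)"
  proof (rule scale_ge[OF c(1) u(2) gp_cont])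
    fix t assume t: "t \<in> {u..v}"
    have "(1-c)*u \<le> (1-c)*t" using t c by (intro mult_left_mono) auto
    then have "(1-c*u)*(1-t) \<le> (1-c*t)*(1-u)" by (simp add: algebra_simps)
    then have le: "r * (1-t) \<le> 1 - c*t" unfolding r_def using u by (simp add: field_simps)
    have ge0: "0 \<le> r * (1-t)" using r0 t u by simp
    have "r^q * (1-t)^q \<le> (1 - c*t)^q"
      using power_mono[OF le ge0, of q] by (simp add: power_mult_distrib)
    moreover have "0 \<le> c^p * t^p" using c t u by simp
    ultimately have "(c^p * t^p) * (r^q * (1-t)^q) \<le> (c^p * t^p) * (1 - c*t)^q"
      by (rule mult_left_mono)
    then show "c^p * r^q * gp p q t \<le> gp p q (c*t)"
      unfolding gp_def by (simp add: power_mult_distrib mult_ac)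
  qed
  then show ?thesis by (simp add: r_def mult_ac)
qed

lemma scale_gp_le:
  assumes c: "0 < c" "c \<le> 1" and v: "0 \<le> v" "v < 1"
  shows "integral {0 .. c * v} (gp p q) \<le> c^(p+1) * ((1 - c * v)/(1-v))^q * integral {0..v} (gp p q)"
proof -
  define r where "r = (1 - c * v)/(1-v)"
  have "integral {c * 0 .. c * v} (gp p q) \<le> c * (c^p * r^q) * integral {0..v} (gp p q)"
  proof (rule scale_le[OF c(1) v(1) gp_cont])
    fix t assume t: "t \<in> {0..v}"
    have "(1-c)*t \<le> (1-c) * v" using t c by (intro mult_left_mono) auto
    then have "(1-c*t)*(1-v) \<le> (1-c * v)*(1-t)" by (simp add: algebra_simps)
    then have le: "1 - c*t \<le> r * (1-t)" unfolding r_def using v by (simp add: field_simps)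
    have ct: "c * t \<le> 1" using c t v mult_mono[of c 1 t 1] by simp
    have "(1 - c*t)^q \<le> r^q * (1-t)^q"
      using power_mono[OF le, of q] ct by (simp add: power_mult_distrib)
    moreover have "0 \<le> c^p * t^p" using c t by simp
    ultimately have "(c^p * t^p) * (1 - c*t)^q \<le> (c^p * t^p) * (r^q * (1-t)^q)"
      by (rule mult_left_mono)
    then show "gp p q (c*t) \<le> c^p * r^q * gp p q t"
      unfolding gp_def by (simp add: power_mult_distrib mult_ac)
  qed
  then show ?thesis by (simp add: r_def mult_ac)
qed



lemma one_minus_le_exp_quad:
  fixes u :: real assumes "0 \<le> u"
  shows "1 - u \<le> exp (- u - u^2/2)"
proof -
  define f where "f t = exp (- t - t^2/2) - (1 - t)" for t :: real
  have "f 0 \<le> f u"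
  proof (rule DERIV_nonneg_imp_nondecreasing[OF assms])
    fix t :: real assume t: "0 \<le> t" "t \<le> u"
    have d: "DERIV f t :> exp (- t - t^2/2) * (- 1 - t) + 1"
      unfolding f_def by (auto intro!: derivative_eq_intros simp: power2_eq_square algebra_simps)
    have "1 + t \<le> exp (t + t^2/2)"
    proof -
      have "1 + t \<le> 1 + (t + t^2/2)" by simp
      also have "\<dots> \<le> exp (t + t^2/2)" by (rule exp_ge_add_one_self)
      finally show ?thesis .
    qed
    then have "(1 + t) * exp (- t - t^2/2) \<le> exp (t + t^2/2) * exp (- t - t^2/2)"
      by (intro mult_right_mono) auto
    also have "\<dots> = 1" by (simp add: exp_add[symmetric])
    finally have "0 \<le> exp (- t - t^2/2) * (- 1 - t) + 1" by (simp add: algebra_simps)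
    with d show "\<exists>y. DERIV f t :> y \<and> 0 \<le> y" by blast
  qed
  then show ?thesis by (simp add: f_def)
qed

lemma ge_exp_ln_bound:
  fixes u :: real assumes "0 \<le> u" "u \<le> 1/2"
  shows "exp (- u - 2 * u^2) \<le> 1 - u"
proof -
  have "- u - 2 * u^2 \<le> ln (1 - u)" by (rule ln_one_minus_pos_lower_bound[OF assms])
  then have "exp (- u - 2 * u^2) \<le> exp (ln (1 - u))" by simp
  also have "\<dots> = 1 - u" using assms by simp
  finally show ?thesis .
qed

lemma exp_one_minus_inv_le:
  fixes r :: real assumes "0 < r"
  shows "exp (1 - 1/r) \<le> r"
proof -
  have "ln (1/r) \<le> 1/r - 1" using assms by (intro ln_le_minus_one) simp
  then have "1 - 1/r \<le> ln r" using assms by (simp add: ln_div)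
  then show ?thesis using assms by (simp add: ln_ge_iff)
qed

lemma pow_exp_ge: "exp t \<le> (b::real) \<Longrightarrow> exp (real n * t) \<le> b ^ n"
  by (simp add: exp_of_nat_mult power_mono)

lemma pow_exp_le: "0 \<le> b \<Longrightarrow> (b::real) \<le> exp t \<Longrightarrow> b ^ n \<le> exp (real n * t)"
  by (simp add: exp_of_nat_mult power_mono)



lemma N1:
  fixes s :: real and j m k :: nat
  assumes ms: "real m = s^2" and s4: "4 \<le> s" and km: "8 * real m \<le> real k" and jm: "j + 1 \<le> m"
  defines "y \<equiv> (real m + 4* s) / real k"
  defines "c1 \<equiv> 1 - 1/s"
  defines "r1 \<equiv> (1 - c1*y) / (1 - y)"
  shows "2 \<le> c1^(j+1) * r1^(k-j)"
proof -
  have s0: "0 < s" using s4 by simp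
  have m16: "16 \<le> real m" using ms s4 mult_mono[of 4 s 4 s] by (simp add: power2_eq_square)
  have k0: "0 < real k" using km m16 by simp
  have "4 * s \<le> real m" using ms s4 s0 by (simp add: power2_eq_square mult_right_mono)
  then have mk: "real m + 4* s < real k" using km m16 by linarith
  have y0: "0 < y" using s0 k0 m16 by (simp add: y_def)
  have y1: "y < 1" using mk k0 by (simp add: y_def)
  have c10: "0 < c1" "c1 \<le> 1" using s4 by (simp_all add: c1_def field_simps)
  have cy: "c1 * y \<le> y" using c10 y0 by simp
  have r1: "1 \<le> r1" using y1 cy by (simp add: r1_def field_simps)
  have kj: "k + 1 - m \<le> k - j" using jm by simp
  have A: "c1^m \<le> c1^(j+1)" by (rule power_decreasing[OF jm]) (use c10 in auto)
  have B: "r1^(k+1-m) \<le> r1^(k-j)" by (rule power_increasing[OF kj r1])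
  have "exp (- (1/s) - 2 * (1/s)^2) \<le> c1"
    unfolding c1_def by (rule ge_exp_ln_bound) (use s4 in \<open>auto simp: field_simps\<close>)
  then have "exp (real m * (- (1/s) - 2 * (1/s)^2)) \<le> c1^m" by (rule pow_exp_ge)
  moreover have "real m * (- (1/s) - 2 * (1/s)^2) = - s - 2"
    using ms s0 by (simp add: field_simps power2_eq_square)
  ultimately have F1: "exp (- s - 2) \<le> c1^m" by simp
  have den: "0 < real k - real m - 3* s + 4" using mk s0 by linarith
  have e1: "1 - 1/r1 = (s + 4) / (real k - real m - 3* s + 4)"
  proof -
    have "1 - c1*y > 0" using cy y1 by simp
    then have "1 - 1/r1 = (y - c1*y) / (1 - c1*y)"
      using y1 by (simp add: r1_def field_simps)
    also have "\<dots> = (s + 4) / (real k - real m - 3* s + 4)"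
    proof -
      have a1: "y - c1*y = (s+4)/real k" unfolding y_def c1_def using s0 k0
        by (simp add: field_simps ms power2_eq_square)
      have a2: "1 - c1*y = (real k - real m - 3* s + 4)/real k" unfolding y_def c1_def using s0 k0
        by (simp add: field_simps ms power2_eq_square)
      show ?thesis unfolding a1 a2 using k0 den by simp
    qed
    finally show ?thesis .
  qed
  have "real m < real k" using mk s0 by linarith
  then have "m \<le> k + 1" by simp
  then have Km: "real (k + 1 - m) = real k + 1 - real m"
    by (simp add: of_nat_diff)
  have "s + 4 \<le> real (k+1-m) * (1 - 1/r1)"
    unfolding e1 Km using den s0 s4 by (simp add: field_simps) (use mult_nonneg_nonneg[of s "s*3"] s4 in linarith)
  moreover have "exp (real (k+1-m) * (1 - 1/r1)) \<le> r1^(k+1-m)"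
    by (rule pow_exp_ge, rule exp_one_minus_inv_le) (use r1 in simp)
  ultimately have F2: "exp (s + 4) \<le> r1^(k+1-m)"
    by (meson exp_le_cancel_iff order_trans)
  have "exp 2 = exp (- s - 2) * exp (s + 4)" by (simp add: exp_add[symmetric])
  also have "\<dots> \<le> c1^m * r1^(k+1-m)" using F1 F2 c10 by (intro mult_mono) auto
  also have "\<dots> \<le> c1^(j+1) * r1^(k-j)" using A B c10 r1 by (intro mult_mono) auto
  finally have "exp 2 \<le> c1^(j+1) * r1^(k-j)" .
  moreover have "(2::real) \<le> exp 2"
    using exp_ge_add_one_self[of 2] by simp
  ultimately show ?thesis by simp
qed



lemma N2:
  fixes s a :: real and j m k :: nat
  assumes ms: "real m = s^2" and a0: "0 < a" and sa: "2*(a+4) \<le> s"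
    and km: "(2 + (a+4)*(2*a+4)) * real m \<le> real k" and jm: "j + 1 \<le> m"
  defines "x \<equiv> (real m - a* s) / real k"
  defines "y \<equiv> (real m + 4* s) / real k"
  defines "c \<equiv> x / y"
  defines "r \<equiv> (1 - c*x) / (1 - x)"
  shows "exp (- (2*(a+4)^2 + a*(a+4) + 1)) \<le> c^(j+1) * r^(k-j)"
proof -
  have s0: "0 < s" using sa a0 by simp
  have s8: "8 \<le> s" using sa a0 by simp
  have mpos: "0 < real m" using ms s0 by simp
  have m_ge: "s \<le> real m" using ms s8 by (simp add: power2_eq_square)
  have as: "a * s < real m" using ms sa s0 a0 by (simp add: power2_eq_square mult_strict_right_mono)
  have ab1: "1 \<le> (a+4)*(2*a+4)" using mult_mono[of 1 "a+4" 1 "2*a+4"] a0 by simp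
  have "real m \<le> (a+4)*(2*a+4)*real m" using mult_right_mono[OF ab1, of "real m"] mpos by simp
  moreover have "(2 + (a+4)*(2*a+4)) * real m = 2 * real m + (a+4)*(2*a+4)*real m"
    by (simp add: algebra_simps)
  ultimately have km2: "3 * real m \<le> real k" using km by linarith
  have k0: "0 < real k" using km2 mpos by simp
  have "4 * s \<le> real m" using m_ge ms s8 by (simp add: power2_eq_square mult_right_mono)
  then have mk: "real m + 4* s < real k" using km2 mpos by linarith
  define u where "u = (a+4)* s / (real m + 4* s)"
  have x0: "0 < x" using as k0 by (simp add: x_def)
  have xy: "x < y" using k0 mult_pos_pos[OF a0 s0] s0 by (simp add: x_def y_def divide_strict_right_mono)
  have y1: "y < 1" using mk k0 by (simp add: y_def)
  have mp4: "0 < real m + 4* s" using mpos s0 by simp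
  have c_eq0: "c = (real m - a* s)/(real m + 4* s)"
    unfolding c_def x_def y_def using k0 by simp
  have c_eq: "c = 1 - u"
    unfolding c_eq0 u_def using mp4 by (simp add: field_simps)
  have c0: "0 < c" "c \<le> 1" using x0 xy unfolding c_def by (simp_all add: field_simps)
  have u0: "0 \<le> u" using a0 s0 mpos by (simp add: u_def)
  have u2: "u \<le> 1/2"
  proof -
    have "(a+4)* s*2 \<le> s* s" using sa s0 by (simp add: mult_right_mono mult.commute)
    then show ?thesis unfolding u_def using s0 mpos ms by (simp add: field_simps power2_eq_square)
  qed
  have cxx: "c * x \<le> x" using c0 x0 mult_right_mono[of c 1 x] by simp
  have cx: "c * x < 1" using cxx xy y1 by linarith
  have r1: "1 \<le> r" using cxx xy y1 unfolding r_def by (simp add: le_divide_eq)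
  have kj: "k + 1 - m \<le> k - j" using jm by simp
  have A: "c^m \<le> c^(j+1)" by (rule power_decreasing[OF jm]) (use c0 in auto)
  have B: "r^(k+1-m) \<le> r^(k-j)" by (rule power_increasing[OF kj r1])
  have mu_le: "real m * u \<le> (a+4)* s"
    unfolding u_def using mpos s0 a0 by (simp add: field_simps)
  have mu2: "real m * u^2 \<le> (a+4)^2"
  proof -
    have "real m * u^2 = (real m * u) * u" by (simp add: power2_eq_square)
    also have "\<dots> \<le> ((a+4)* s) * ((a+4)/s)"
    proof (rule mult_mono[OF mu_le])
      have "u \<le> (a+4)* s / real m" unfolding u_def using mpos a0 s0 by (intro divide_left_mono) auto
      also have "\<dots> = (a+4)/s" using s0 ms by (simp add: power2_eq_square)
      finally show "u \<le> (a+4)/s" .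
    qed (use u0 a0 s0 in auto)
    also have "\<dots> = (a+4)^2" using s0 by (simp add: power2_eq_square)
    finally show ?thesis .
  qed
  have "exp (real m * (- u - 2 * u^2)) \<le> c^m"
    unfolding c_eq by (rule pow_exp_ge, rule ge_exp_ln_bound[OF u0 u2])
  moreover have "- real m * u - 2*(a+4)^2 \<le> real m * (- u - 2 * u^2)"
    using mu2 by (simp add: algebra_simps)
  ultimately have F1: "exp (- real m * u - 2*(a+4)^2) \<le> c^m"
    by (meson exp_le_cancel_iff order_trans)
  have Dpos: "0 < real k * (1 - c*x)" using k0 cx by simp
  have cx_ge: "real m - (2*a+4)* s \<le> c * (real m - a* s)"
  proof -
    have "c * (real m - a* s) = (real m - a* s)^2 / (real m + 4* s)"
      unfolding c_eq0 by (simp add: power2_eq_square)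
    moreover have "(real m + 4* s) * (real m - (2*a+4)* s) \<le> (real m - a* s)^2"
    proof -
      have "(real m + 4* s) * (real m - (2*a+4)* s) = (real m - a* s)^2 - (a^2 + 8*a + 16) * (s* s)"
        using ms by (simp add: power2_eq_square algebra_simps)
      moreover have "0 \<le> (a^2 + 8*a + 16) * (s* s)" using a0 by simp
      ultimately show ?thesis by linarith
    qed
    ultimately show ?thesis using mp4 by (simp add: le_divide_eq mult.commute)
  qed
  define D where "D = real k - real m + (2*a+4)* s"
  have kD: "real k * (1 - c*x) \<le> D"
  proof -
    have "real k * (1 - c*x) = real k - c * (real m - a* s)"
      unfolding x_def using k0 by (simp add: field_simps)
    then show ?thesis using cx_ge by (simp add: D_def)
  qed
  have e1: "1 - 1/r = u * x / (1 - c*x)"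
  proof -
    have ne: "1 - c*x \<noteq> 0" using cx by simp
    have "1 - 1/r = 1 - (1-x)/(1-c*x)" by (simp add: r_def)
    also have "\<dots> = ((1 - c*x) - (1-x))/(1-c*x)" using ne by (simp add: field_simps)
    also have "(1 - c*x) - (1-x) = u * x" unfolding c_eq by (simp add: algebra_simps)
    finally show ?thesis .
  qed
  have Km: "real (k + 1 - m) = real k + 1 - real m" using mk s0
    by (simp add: of_nat_diff)
  have kmpos: "0 < real k - real m" using mk s0 by linarith
  have key: "real m * u - a*(a+4) - 1 \<le> real (k+1-m) * (1 - 1/r)"
  proof -
    have "real (k+1-m) * (1 - 1/r) = (real k + 1 - real m) * (u * (real m - a* s)) / (real k * (1 - c*x))"
      unfolding e1 Km x_def using k0 by (simp add: field_simps)
    also have "\<dots> \<ge> (real k - real m) * (u * (real m - a* s)) / D"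
    proof (rule frac_le)
      show "0 \<le> (real k + 1 - real m) * (u * (real m - a * s))"
        using kmpos u0 as by simp
      show "(real k - real m) * (u * (real m - a* s)) \<le> (real k + 1 - real m) * (u * (real m - a * s))"
        using u0 as by (intro mult_right_mono) auto
    qed (use Dpos kD in auto)
    finally have 1: "(real k - real m) * (u * (real m - a* s)) / D \<le> real (k+1-m) * (1 - 1/r)" .
    have Dp: "0 < D" using kmpos s0 a0 by (simp add: D_def add_pos_nonneg)
    have "(real k - real m) / D = 1 - (2*a+4)* s / D" using Dp by (simp add: D_def field_simps)
    moreover have "(2*a+4)* s / D \<le> (2*a+4)* s / (real k - real m)"
      using kmpos a0 s0 Dp by (intro divide_left_mono) (auto simp: D_def)
    ultimately have 2: "1 - (2*a+4)* s / (real k - real m) \<le> (real k - real m) / D" by simp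
    have U: "0 \<le> u * (real m - a* s)" using u0 as by simp
    have 3: "u * (real m - a* s) * (1 - (2*a+4)* s / (real k - real m)) \<le> (real k - real m) * (u * (real m - a* s)) / D"
      using mult_left_mono[OF 2 U] by (simp add: mult.commute)
    have 4: "u * (real m - a* s) \<ge> real m * u - a*(a+4)"
    proof -
      have "u * a * s = a*(a+4) * (s* s / (real m + 4* s))" unfolding u_def by (simp add: field_simps)
      also have "\<dots> \<le> a*(a+4) * 1" using s0 ms a0
        by (intro mult_left_mono) (auto simp: power2_eq_square)
      finally show ?thesis by (simp add: algebra_simps)
    qed
    have 5: "u * (real m - a* s) * ((2*a+4)* s / (real k - real m)) \<le> 1"
    proof -
      have "u * (real m - a* s) \<le> real m * u" using u0 a0 s0 mult_left_mono[of "real m - a* s" "real m" u]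
        by (simp add: mult.commute)
      then have "u * (real m - a* s) \<le> (a+4)* s" using mu_le by linarith
      then have "u * (real m - a* s) * ((2*a+4)* s / (real k - real m)) \<le> (a+4)* s * ((2*a+4)* s / (real k - real m))"
        using kmpos a0 s0 by (intro mult_right_mono) auto
      also have "\<dots> = (a+4)*(2*a+4)*real m / (real k - real m)"
        using ms by (simp add: power2_eq_square)
      also have "\<dots> \<le> 1" using kmpos km by (simp add: field_simps)
      finally show ?thesis .
    qed
    have "real m * u - a*(a+4) - 1 \<le> u * (real m - a* s) * (1 - (2*a+4)* s / (real k - real m))"
      using 4 5 by (simp add: algebra_simps)
    with 3 1 show ?thesis by linarith
  qed
  have "exp (real (k+1-m) * (1 - 1/r)) \<le> r^(k+1-m)"
    by (rule pow_exp_ge, rule exp_one_minus_inv_le) (use r1 in simp)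
  with key have F2: "exp (real m * u - a*(a+4) - 1) \<le> r^(k+1-m)"
    by (meson exp_le_cancel_iff order_trans)
  have "exp (- (2*(a+4)^2 + a*(a+4) + 1)) = exp (- real m * u - 2*(a+4)^2) * exp (real m * u - a*(a+4) - 1)"
    by (simp add: exp_add[symmetric])
  also have "\<dots> \<le> c^m * r^(k+1-m)" using F1 F2 c0 by (intro mult_mono) auto
  also have "\<dots> \<le> c^(j+1) * r^(k-j)" using A B c0 r1 by (intro mult_mono) auto
  finally show ?thesis .
qed



lemma NB:
  fixes s a :: real and j m k :: nat
  assumes ms: "real m = s^2" and a0: "0 < a" and sa: "a < s"
    and mk: "m < k" and jm: "m \<le> j" and jk: "j \<le> k"
  defines "x \<equiv> (real m - a* s) / real k"
  defines "P \<equiv> real m / real k"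
  defines "c \<equiv> x / P"
  defines "r \<equiv> (1 - x) / (1 - P)"
  shows "c^(j+1) * r^(k-j) \<le> exp (- (a^2/2))"
proof -
  have s0: "0 < s" using sa a0 by simp
  have mpos: "0 < real m" using ms s0 by simp
  have k0: "0 < real k" using mk by simp
  have kmpos: "0 < real k - real m" using mk by simp
  have as: "a * s < real m" using ms sa s0 by (simp add: power2_eq_square mult_strict_right_mono)
  have c_eq: "c = 1 - a/s"
  proof -
    have "c = (real m - a* s) / real m" unfolding c_def x_def P_def using k0 by simp
    also have "\<dots> = 1 - a/s" using mpos s0 ms by (simp add: diff_divide_distrib power2_eq_square)
    finally show ?thesis .
  qed
  have r_eq: "r = 1 + a* s/(real k - real m)"
  proof -
    have "r = (real k - real m + a* s) / (real k - real m)"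
    proof -
      have "1 - x = (real k - real m + a* s) / real k" unfolding x_def using k0 by (simp add: field_simps)
      moreover have "1 - P = (real k - real m) / real k" unfolding P_def using k0 by (simp add: field_simps)
      ultimately show ?thesis unfolding r_def using k0 by simp
    qed
    also have "\<dots> = 1 + a* s/(real k - real m)" using kmpos by (simp add: field_simps)
    finally show ?thesis .
  qed
  have c0: "0 \<le> c" "c \<le> 1" unfolding c_eq using sa s0 a0 by (simp_all add: field_simps)
  have r1: "1 \<le> r" unfolding r_eq using kmpos a0 s0 by simp
  have A: "c^(j+1) \<le> c^m" by (rule power_decreasing) (use jm c0 in auto)
  have B: "r^(k-j) \<le> r^(k-m)" by (rule power_increasing) (use jk jm r1 in auto)
  have "c \<le> exp (- (a/s) - (a/s)^2/2)" unfolding c_eq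
    by (rule one_minus_le_exp_quad) (use a0 s0 in simp)
  then have "c^m \<le> exp (real m * (- (a/s) - (a/s)^2/2))" by (rule pow_exp_le[OF c0(1)])
  moreover have "real m * (- (a/s) - (a/s)^2/2) = - a* s - (a^2/2)"
    using ms s0 by (simp add: field_simps power2_eq_square)
  ultimately have F1: "c^m \<le> exp (- a* s - (a^2/2))" by simp
  have "r \<le> exp (a* s/(real k - real m))" unfolding r_eq
    by (metis add.commute exp_ge_add_one_self)
  then have "r^(k-m) \<le> exp (real (k-m) * (a* s/(real k - real m)))"
    using pow_exp_le[of r "a* s/(real k - real m)" "k-m"] r1 by simp
  moreover have "real (k-m) * (a* s/(real k - real m)) = a* s"
    using kmpos mk by (simp add: of_nat_diff)
  ultimately have F2: "r^(k-m) \<le> exp (a* s)" by simp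
  have "c^(j+1) * r^(k-j) \<le> c^m * r^(k-m)"
    using A B c0 r1 by (intro mult_mono) auto
  also have "\<dots> \<le> exp (- a* s - (a^2/2)) * exp (a* s)"
    using F1 F2 c0 r1 by (intro mult_mono) auto
  also have "\<dots> = exp (- (a^2/2))" by (simp add: exp_add[symmetric])
  finally show ?thesis .
qed



lemma sqrt_ge_of_nat_ge:
  fixes b :: real assumes "0 \<le> b" "nat \<lceil>b^2\<rceil> \<le> m"
  shows "b \<le> sqrt (real m)"
proof -
  have "b^2 \<le> real_of_int \<lceil>b^2\<rceil>" by (rule le_of_int_ceiling)
  also have "\<dots> \<le> real (nat \<lceil>b^2\<rceil>)" by simp
  also have "\<dots> \<le> real m" by (rule of_nat_mono[OF assms(2)])
  finally have "b^2 \<le> real m" .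
  then have "sqrt (b^2) \<le> sqrt (real m)" by (rule real_sqrt_le_mono)
  then show ?thesis using assms(1) by simp
qed

theorem lemma3p2:
  fixes mk :: "nat \<Rightarrow> nat"
  assumes lim: "(\<lambda>k. real (mk k) / real k) \<longlonglongrightarrow> 0"
  shows "(\<forall>a::real. a > 0 \<longrightarrow>
            (\<exists>eps::real. eps > 0 \<and> (\<exists>k0 m0::nat. \<forall>k\<ge>k0. \<forall>m::nat. m0 \<le> m \<and> m \<le> mk k \<longrightarrow>
               (\<forall>j\<in>{0..<m}. inc_beta (real j + 1) (real k - real j + 1)
                                 ((real m - a * sqrt (real m)) / real k) \<ge> eps))))
       \<and> (\<forall>eps::real. eps > 0 \<longrightarrow>
            (\<exists>a::real. a > 0 \<and> (\<exists>k0 m0::nat. \<forall>k\<ge>k0. \<forall>m::nat. m0 \<le> m \<and> m \<le> mk k \<longrightarrow>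
               (\<forall>j\<in>{m..k}. inc_beta (real j + 1) (real k - real j + 1)
                                 ((real m - a * sqrt (real m)) / real k)
                             \<le> eps * inc_beta (real j + 1) (real k - real j + 1) (real m / real k)))))"
proof (intro conjI allI impI)
  fix a :: real assume a0: "a > 0"
  define L where "L = 2*(a+4)^2 + a*(a+4) + 1"
  define \<kappa> where "\<kappa> = exp (- L)"
  define eps where "eps = \<kappa> / (2*(1+\<kappa>))"
  define M where "M = 8 + (a+4)*(2*a+4)"
  have kp: "0 < \<kappa>" by (simp add: \<kappa>_def)
  have eps0: "0 < eps" using kp by (simp add: eps_def)
  have M0: "0 < M" using a0 by (simp add: M_def add_pos_nonneg)
  have "\<forall>\<^sub>F k in sequentially. real (mk k) / real k < 1/M"
    using order_tendstoD(2)[OF lim, of "1/M"] M0 by simp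
  then obtain N where N: "\<And>k. k \<ge> N \<Longrightarrow> real (mk k) / real k < 1/M"
    by (auto simp: eventually_sequentially)
  define m0 where "m0 = nat \<lceil>(2*(a+4))^2\<rceil>"
  show "\<exists>eps::real. eps > 0 \<and> (\<exists>k0 m0::nat. \<forall>k\<ge>k0. \<forall>m::nat. m0 \<le> m \<and> m \<le> mk k \<longrightarrow>
               (\<forall>j\<in>{0..<m}. inc_beta (real j + 1) (real k - real j + 1)
                                 ((real m - a * sqrt (real m)) / real k) \<ge> eps))"
  proof (rule exI[of _ eps], rule conjI[OF eps0], rule exI[of _ "max N 1"], rule exI[of _ m0], intro allI impI ballI)
    fix k m j assume k: "max N 1 \<le> k" and m: "m0 \<le> m \<and> m \<le> mk k" and j: "j \<in> {0..<m}"
    have k0: "0 < real k" using k by simp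
    have "real (mk k) / real k < 1/M" using N[of k] k by simp
    then have "M * real (mk k) < real k" using k0 M0 by (simp add: field_simps)
    moreover have "M * real m \<le> M * real (mk k)" using m M0 by simp
    ultimately have Mm: "M * real m < real k" by linarith
    define s where "s = sqrt (real m)"
    have ms: "real m = s^2" by (simp add: s_def)
    have sa: "2*(a+4) \<le> s" unfolding s_def using a0 m
      by (intro sqrt_ge_of_nat_ge) (auto simp: m0_def)
    have s4: "4 \<le> s" using sa a0 by simp
    have s0: "0 < s" using s4 by simp
    have mpos: "0 < real m" using ms s0 by simp
    have Pm: "0 \<le> (a+4)*(2*a+4)*real m" using a0 mpos by simp
    have eqM: "M * real m = 8 * real m + (a+4)*(2*a+4)*real m" unfolding M_def by (simp add: algebra_simps)
    have eq2: "(2 + (a+4)*(2*a+4)) * real m = 2 * real m + (a+4)*(2*a+4)*real m" by (simp add: algebra_simps)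
    have km8: "8 * real m \<le> real k" using Mm Pm eqM by linarith
    have km2: "(2 + (a+4)*(2*a+4)) * real m \<le> real k" using Mm eqM eq2 mpos by linarith
    have jm: "j + 1 \<le> m" using j by simp
    have mk: "m < k" using km8 mpos by simp
    have jk: "j \<le> k" using jm mk by simp
    define g where "g = gp j (k - j)"
    define x where "x = (real m - a* s) / real k"
    define y where "y = (real m + 4* s) / real k"
    define c1 where "c1 = 1 - 1/s"
    define r1 where "r1 = (1 - c1*y)/(1-y)"
    define c where "c = x / y"
    define r where "r = (1 - c*x)/(1-x)"
    have N1v: "2 \<le> c1^(j+1) * r1^(k-j)"
      using N1[OF ms s4 km8 jm] unfolding y_def c1_def r1_def .
    have N2v: "\<kappa> \<le> c^(j+1) * r^(k-j)"
      using N2[OF ms a0 sa km2 jm] unfolding x_def y_def c_def r_def \<kappa>_def L_def .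
    have as: "a * s < real m" using ms sa s0 a0 by (simp add: power2_eq_square mult_strict_right_mono)
    have "4 * s \<le> real m" using ms s4 s0 by (simp add: power2_eq_square mult_right_mono)
    then have my: "real m + 4* s < real k" using km8 mpos by linarith
    have x0: "0 < x" using as k0 by (simp add: x_def)
    have xy: "x < y" using k0 mult_pos_pos[OF a0 s0] s0 by (simp add: x_def y_def divide_strict_right_mono)
    have y1: "y < 1" using my k0 by (simp add: y_def)
    have y0: "0 < y" using x0 xy by simp
    have c10: "0 < c1" "c1 \<le> 1" using s4 by (simp_all add: c1_def field_simps)
    have c0: "0 < c" "c \<le> 1" using x0 xy by (simp_all add: c_def field_simps)
    have cy: "c * y = x" using y0 by (simp add: c_def)
    define B where "B = integral {0..1} g"
    define A where "A = integral {0..x} g"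
    define T where "T = integral {y..1} g"
    define Ixy where "Ixy = integral {x..y} g"
    have gnn: "\<And>t. t \<in> {0..1} \<Longrightarrow> 0 \<le> g t" unfolding g_def by (auto intro: gp_nonneg)
    have T0: "0 \<le> T" unfolding T_def using y0 by (intro integral_nonneg) (auto simp: g_def intro!: gp_nonneg)
    have A0: "0 \<le> A" unfolding A_def using xy y1 by (intro integral_nonneg) (auto simp: g_def intro!: gp_nonneg)
    have "c1^(j+1) * ((1 - c1*y)/(1-y))^(k-j) * integral {y..1} g \<le> integral {c1 * y .. c1 * 1} g"
      unfolding g_def by (rule scale_gp_ge) (use c10 y0 y1 in auto)
    also have "\<dots> \<le> B" unfolding B_def
    proof (rule integral_subset_le)
      show "{c1 * y..c1 * 1} \<subseteq> {0..1}" using c10 y0 y1 mult_nonneg_nonneg[of c1 y] by auto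
    qed (auto simp: g_def intro!: gp_nonneg)
    finally have "c1^(j+1) * r1^(k-j) * T \<le> B" by (simp add: r1_def T_def)
    moreover have "2 * T \<le> c1^(j+1) * r1^(k-j) * T" using N1v T0 by (rule mult_right_mono)
    ultimately have TB: "2 * T \<le> B" by linarith
    have "c^(j+1) * ((1 - c*x)/(1-x))^(k-j) * integral {x..y} g \<le> integral {c * x .. c * y} g"
      unfolding g_def by (rule scale_gp_ge) (use c0 x0 xy y1 in auto)
    also have "\<dots> \<le> A" unfolding A_def cy
    proof (rule integral_subset_le)
      show "{c * x..x} \<subseteq> {0..x}" using c0 x0 by auto
    qed (use xy y1 in \<open>auto simp: g_def intro!: gp_nonneg\<close>)
    finally have I2: "c^(j+1) * r^(k-j) * Ixy \<le> A" by (simp add: r_def Ixy_def)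
    have "integral {0..x} g + integral {x..y} g = integral {0..y} g"
      using x0 xy by (intro Henstock_Kurzweil_Integration.integral_combine) (auto simp: g_def)
    moreover have "integral {0..y} g + integral {y..1} g = integral {0..1} g"
      using y0 y1 by (intro Henstock_Kurzweil_Integration.integral_combine) (auto simp: g_def)
    ultimately have Isum: "A + Ixy + T = B" by (simp add: A_def Ixy_def T_def B_def)
    have epsB: "eps * B \<le> A"
    proof (cases "0 \<le> Ixy")
      case True
      have "\<kappa> * Ixy \<le> c^(j+1) * r^(k-j) * Ixy" using N2v True by (rule mult_right_mono)
      with I2 have "\<kappa> * Ixy \<le> A" by linarith
      moreover have "\<kappa> * (B/2 - A) \<le> \<kappa> * Ixy" using kp Isum TB by (intro mult_left_mono) auto
      ultimately have "\<kappa> * B \<le> 2 * (1 + \<kappa>) * A" by (simp add: algebra_simps)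
      then show ?thesis using kp by (simp add: eps_def field_simps)
    next
      case False
      then have "B \<le> 2 * A" using Isum TB by linarith
      moreover have "eps \<le> 1/2" using kp by (simp add: eps_def field_simps)
      moreover have "0 \<le> B" using Isum A0 T0 TB by linarith
      ultimately have "eps * B \<le> (1/2) * B" by (intro mult_right_mono)
      with \<open>B \<le> 2 * A\<close> show ?thesis by linarith
    qed
    have Bpos: "0 < B" unfolding B_def g_def using Beta_pos[of j "k-j"] Beta_J[of j "k-j"] by simp
    have "inc_beta (real j + 1) (real k - real j + 1) x = A / B"
      using inc_beta_gp[OF jk, of x] x0 xy y1 by (simp add: A_def B_def g_def)
    then show "eps \<le> inc_beta (real j + 1) (real k - real j + 1) ((real m - a * sqrt (real m)) / real k)"
      using epsB Bpos by (simp add: x_def s_def le_divide_eq)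
  qed
next
  fix eps :: real assume eps0: "eps > 0"
  define a where "a = sqrt (2 * \<bar>ln eps\<bar>) + 1"
  have a0: "0 < a" by (simp add: a_def add_nonneg_pos)
  have ea: "exp (- (a^2/2)) \<le> eps"
  proof -
    have "sqrt (2 * \<bar>ln eps\<bar>) \<le> a" by (simp add: a_def)
    then have "(sqrt (2 * \<bar>ln eps\<bar>))^2 \<le> a^2" by (intro power_mono) auto
    then have "2 * \<bar>ln eps\<bar> \<le> a^2" by simp
    then have "- (a^2/2) \<le> ln eps" by linarith
    then have "exp (- (a^2/2)) \<le> exp (ln eps)" by simp
    then show ?thesis using eps0 by simp
  qed
  have "\<forall>\<^sub>F k in sequentially. real (mk k) / real k < 1/2"
    using order_tendstoD(2)[OF lim, of "1/2"] by simp
  then obtain N where N: "\<And>k. k \<ge> N \<Longrightarrow> real (mk k) / real k < 1/2"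
    by (auto simp: eventually_sequentially)
  define m0 where "m0 = nat \<lceil>(a+1)^2\<rceil>"
  show "\<exists>a::real. a > 0 \<and> (\<exists>k0 m0::nat. \<forall>k\<ge>k0. \<forall>m::nat. m0 \<le> m \<and> m \<le> mk k \<longrightarrow>
               (\<forall>j\<in>{m..k}. inc_beta (real j + 1) (real k - real j + 1)
                                 ((real m - a * sqrt (real m)) / real k)
                             \<le> eps * inc_beta (real j + 1) (real k - real j + 1) (real m / real k)))"
  proof (rule exI[of _ a], rule conjI[OF a0], rule exI[of _ "max N 1"], rule exI[of _ m0], intro allI impI ballI)
    fix k m j assume k: "max N 1 \<le> k" and m: "m0 \<le> m \<and> m \<le> mk k" and j: "j \<in> {m..k}"
    have k0: "0 < real k" using k by simp
    have "real (mk k) / real k < 1/2" using N[of k] k by simp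
    then have "2 * real (mk k) < real k" using k0 by (simp add: field_simps)
    then have mk: "m < k" using m by linarith
    define s where "s = sqrt (real m)"
    have ms: "real m = s^2" by (simp add: s_def)
    have sa1: "a + 1 \<le> s" unfolding s_def using a0 m
      by (intro sqrt_ge_of_nat_ge) (auto simp: m0_def)
    have sa: "a < s" using sa1 by simp
    have s0: "0 < s" using sa a0 by simp
    have mpos: "0 < real m" using ms s0 by simp
    have jm: "m \<le> j" and jk: "j \<le> k" using j by auto
    define g where "g = gp j (k - j)"
    define x where "x = (real m - a* s) / real k"
    define P where "P = real m / real k"
    define c where "c = x / P"
    define r where "r = (1 - x)/(1 - P)"
    have NBv: "c^(j+1) * r^(k-j) \<le> exp (- (a^2/2))"
      using NB[OF ms a0 sa mk jm jk] unfolding x_def P_def c_def r_def .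
    have as: "a * s < real m" using ms sa s0 a0 by (simp add: power2_eq_square mult_strict_right_mono)
    have x0: "0 < x" using as k0 by (simp add: x_def)
    have xP: "x \<le> P" using k0 a0 s0 by (simp add: x_def P_def divide_right_mono)
    have P1: "P < 1" using mk k0 by (simp add: P_def)
    have P0: "0 < P" using x0 xP by simp
    have c0: "0 < c" "c \<le> 1" using x0 xP P0 by (simp_all add: c_def field_simps)
    have cP: "c * P = x" using P0 by (simp add: c_def)
    have "integral {0 .. c * P} g \<le> c^(j+1) * ((1 - c * P)/(1-P))^(k-j) * integral {0..P} g"
      unfolding g_def by (rule scale_gp_le) (use c0 P0 P1 in auto)
    then have I: "integral {0..x} g \<le> c^(j+1) * r^(k-j) * integral {0..P} g"
      unfolding cP r_def .
    have IP0: "0 \<le> integral {0..P} g" using P0 P1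
      by (intro integral_nonneg) (auto simp: g_def intro!: gp_nonneg)
    have "c^(j+1) * r^(k-j) * integral {0..P} g \<le> eps * integral {0..P} g"
      using NBv ea IP0 by (intro mult_right_mono) auto
    with I have main: "integral {0..x} g \<le> eps * integral {0..P} g" by linarith
    have Bpos: "0 < integral {0..1} g" unfolding g_def using Beta_pos[of j "k-j"] Beta_J[of j "k-j"] by simp
    have e1: "inc_beta (real j + 1) (real k - real j + 1) x = integral {0..x} g / integral {0..1} g"
      using inc_beta_gp[OF jk, of x] xP P1 by (simp add: g_def)
    have e2: "inc_beta (real j + 1) (real k - real j + 1) P = integral {0..P} g / integral {0..1} g"
      using inc_beta_gp[OF jk, of P] P1 by (simp add: g_def)
    have "integral {0..x} g / integral {0..1} g \<le> eps * (integral {0..P} g / integral {0..1} g)"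
      using main Bpos by (simp add: divide_right_mono)
    then show "inc_beta (real j + 1) (real k - real j + 1) ((real m - a * sqrt (real m)) / real k)
          \<le> eps * inc_beta (real j + 1) (real k - real j + 1) (real m / real k)"
      using e1 e2 by (simp add: x_def P_def s_def)
  qed
qed


end
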